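(* Let $q\in\mathbb{C}$ with $q\neq 0,1$ and $q$ not a root of unity. Let $(L,\sigma,\theta^{*})$ be a (commutative) qsi field extension of $\mathbb{C}$. If a matrix $Y=(y_{ij})\in \mathrm{M}_2(L)$ satisfies \[ \sigma Y=\begin{bmatrix} q&0\\0&1\end{bmatrix}Y \quad\text{and}\quad \theta^{(1)}Y=\begin{bmatrix}0&1\\0&0\end{bmatrix}Y \] (with $\sigma,\theta^{(1)}$ applied entrywise), then $\det Y=0$.
   Context: Fix $q\in\mathbb{C}$, $q\neq0,1$, not a root of unity; put $[m]_q=1+q+\dots+q^{m-1}$ and $[m]_q!=[1]_q[2]_q\cdots[m]_q$. A qsi (q-SI $\sigma$-differential) algebra over $\mathbb{C}$ is a triple $(A,\sigma,\theta^{*})$ where $A$ is a $\mathbb{C}$-algebra, $\sigma:A\to A$ is a $\mathbb{C}$-algebra automorphism, $\theta^{*}=\{\theta^{(m)}\}_{m\in\mathbb{N}}$ is a family of $\mathbb{C}$-linear maps $A\to A$ with $\theta^{(0)}=\mathrm{Id}_A$, $\theta^{(m)}=\frac{1}{[m]_q!}(\theta^{(1)})^m$, and $\theta^{(1)}$ satisfies the twisted Leibniz rule $\theta^{(1)}(ab)=\theta^{(1)}(a)\,b+\sigma(a)\,\theta^{(1)}(b)$ and $\theta^{(1)}\circ\sigma=q\,\sigma\circ\theta^{(1)}$, with $\sigma$ and $\theta^{(1)}$ acting on $\mathbb{C}$ as the identity and zero respectively. A qsi field is a qsi algebra whose underlying ring is a commutative field. The model example is $\mathbb{C}(t)$ with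 $\sigma(f)(t)=f(qt)$ and $\theta^{(1)}f=\frac{f(qt)-f(t)}{(q-1)t}$. *)

theory Defs
  imports "HOL-Analysis.Analysis"
begin

definition q_int :: "complex \<Rightarrow> nat \<Rightarrow> complex" where
  "q_int q m = (\<Sum>i<m. q ^ i)"

definition q_fact :: "complex \<Rightarrow> nat \<Rightarrow> complex" where
  "q_fact q m = (\<Prod>k\<in>{1..m}. q_int q k)"

text \<open>A commutative field L, viewed as a field extension of the complex numbers via
  the ring homomorphism iota, together with a qsi structure (sigma, theta).
  The complex-scalar action on L is  c . a = iota c * a.\<close>
definition qsi_field :: "complex \<Rightarrow> (complex \<Rightarrow> 'L::field) \<Rightarrow> ('L \<Rightarrow> 'L) \<Rightarrow> (nat \<Rightarrow> 'L \<Rightarrow> 'L) \<Rightarrow> bool" where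
  "qsi_field q \<iota> \<sigma> \<theta> \<longleftrightarrow>
     \<comment> \<open>iota is a ring homomorphism C -> L (making L a C-algebra / field extension of C)\<close>
     (\<forall>a b. \<iota> (a + b) = \<iota> a + \<iota> b) \<and> (\<forall>a b. \<iota> (a * b) = \<iota> a * \<iota> b) \<and> \<iota> 1 = 1 \<and>
     \<comment> \<open>sigma is a C-algebra automorphism\<close>
     bij \<sigma> \<and> (\<forall>a b. \<sigma> (a + b) = \<sigma> a + \<sigma> b) \<and> (\<forall>a b. \<sigma> (a * b) = \<sigma> a * \<sigma> b) \<and>
     (\<forall>c. \<sigma> (\<iota> c) = \<iota> c) \<and>
     \<comment> \<open>theta 0 = Id, theta m = (theta 1)^m / [m]_q!\<close>
     \<theta> 0 = id \<and> (\<forall>m. \<theta> m = (\<lambda>a. inverse (\<iota> (q_fact q m)) * (\<theta> 1 ^^ m) a)) \<and>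
     \<comment> \<open>theta 1 is C-linear\<close>
     (\<forall>a b. \<theta> 1 (a + b) = \<theta> 1 a + \<theta> 1 b) \<and> (\<forall>c a. \<theta> 1 (\<iota> c * a) = \<iota> c * \<theta> 1 a) \<and>
     \<comment> \<open>twisted Leibniz rule\<close>
     (\<forall>a b. \<theta> 1 (a * b) = \<theta> 1 a * b + \<sigma> a * \<theta> 1 b) \<and>
     \<comment> \<open>theta 1 o sigma = q sigma o theta 1\<close>
     (\<forall>a. \<theta> 1 (\<sigma> a) = \<iota> q * \<sigma> (\<theta> 1 a)) \<and>
     \<comment> \<open>theta 1 vanishes on C\<close>
     (\<forall>c. \<theta> 1 (\<iota> c) = 0)"

definition mat2 :: "'a::zero \<Rightarrow> 'a \<Rightarrow> 'a \<Rightarrow> 'a \<Rightarrow> 'a^2^2" where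
  "mat2 a b c d = vector [vector [a, b], vector [c, d]]"

definition entrywise :: "('a \<Rightarrow> 'a) \<Rightarrow> 'a^'n^'m \<Rightarrow> 'a^'n^'m" where
  "entrywise f Y = (\<chi> i j. f (Y $ i $ j))"

end

theory Submission
  imports Defs
begin

theorem lemma1:
  fixes q :: complex and \<iota> :: "complex \<Rightarrow> 'L::field"
    and \<sigma> :: "'L \<Rightarrow> 'L" and \<theta> :: "nat \<Rightarrow> 'L \<Rightarrow> 'L" and Y :: "'L^2^2"
  assumes "q \<noteq> 0" and "q \<noteq> 1" and "\<forall>n>0. q ^ n \<noteq> 1"
    and "qsi_field q \<iota> \<sigma> \<theta>"
    and "entrywise \<sigma> Y = mat2 (\<iota> q) 0 0 1 ** Y"
    and "entrywise (\<theta> 1) Y = mat2 0 1 0 0 ** Y"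
  shows "det Y = 0"
proof -
  define a where "a = Y$1$1"
  define b where "b = Y$1$2"
  define c where "c = Y$2$1"
  define d where "d = Y$2$2"
  note QQ = assms(4)[unfolded qsi_field_def]
  have Q1: "\<forall>a b. \<iota> (a + b) = \<iota> a + \<iota> b" by (fact QQ[THEN conjunct1])
  have Q2: "\<forall>a b. \<iota> (a * b) = \<iota> a * \<iota> b" by (fact QQ[THEN conjunct2, THEN conjunct1])
  have Q3: "\<iota> 1 = 1" by (fact QQ[THEN conjunct2, THEN conjunct2, THEN conjunct1])
  have Q4: "\<forall>a b. \<theta> 1 (a * b) = \<theta> 1 a * b + \<sigma> a * \<theta> 1 b" by (fact QQ[THEN conjunct2, THEN conjunct2, THEN conjunct2, THEN conjunct2, THEN conjunct2, THEN conjunct2, THEN conjunct2, THEN conjunct2, THEN conjunct2, THEN conjunct2, THEN conjunct2, THEN conjunct1])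
  note Q = Q1 Q2 Q3 Q4
  have sum2: "\<And>f::2\<Rightarrow>'L. sum f UNIV = f 1 + f 2"
    by (simp add: UNIV_2)
  have E: "\<And>i j. \<sigma> (Y$i$j) = (mat2 (\<iota> q) 0 0 1 ** Y)$i$j"
          "\<And>i j. \<theta> 1 (Y$i$j) = (mat2 0 1 0 0 ** Y)$i$j"
  proof -
    fix i j
    have "\<sigma> (Y$i$j) = entrywise \<sigma> Y $i$j" by (simp only: entrywise_def vec_lambda_beta)
    then show "\<sigma> (Y$i$j) = (mat2 (\<iota> q) 0 0 1 ** Y)$i$j" by (simp only: assms(5))
  next
    fix i j
    have "\<theta> 1 (Y$i$j) = entrywise (\<theta> 1) Y $i$j" by (simp only: entrywise_def vec_lambda_beta)
    then show "\<theta> 1 (Y$i$j) = (mat2 0 1 0 0 ** Y)$i$j" by (simp only: assms(6))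
  qed
  have sa: "\<sigma> a = \<iota> q * a" and sb: "\<sigma> b = \<iota> q * b"
    and ta: "\<theta> 1 a = c" and tb: "\<theta> 1 b = d"
    unfolding a_def b_def c_def d_def E
    by (simp_all add: matrix_matrix_mult_def sum2 mat2_def)
  have "\<theta> 1 (a*b) = \<theta> 1 (b*a)" by (simp add: mult.commute)
  hence "c*b + \<iota> q * a * d = d*a + \<iota> q * b * c"
    using Q(4) sa sb ta tb by simp
  hence eq: "(\<iota> q - 1) * (a*d - b*c) = 0" by (simp add: algebra_simps)
  have "\<iota> q \<noteq> 1"
  proof
    assume h: "\<iota> q = 1"
    have "\<iota> (q - 1) + \<iota> 1 = \<iota> q" using Q(1) by (metis diff_add_cancel)
    hence z: "\<iota> (q - 1) = 0" using h Q(3) by simp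
    have "\<iota> ((q-1) * inverse (q-1)) = 1" using assms(2) Q(3) by simp
    thus False using Q(2) z by simp
  qed
  with eq have "a*d - b*c = 0" by simp
  thus ?thesis by (simp add: det_2 a_def b_def c_def d_def)
qed

end
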